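(* Let $A\in M_2(\mathbb{C})$ with $\operatorname{tr}A=0$ and $q\in\mathbb{R}$. Let $M_A=I\otimes A-q\,A^T\otimes I\in M_4(\mathbb{C})$. Then the operator norm of $M_A$ satisfies $$\|M_A\|_{op}^2\le (1+q^2)\,\|A\|_F^2 .$$
   Context: $\|X\|_F=\sqrt{\operatorname{tr}(XX^\dagger)}$ is the Frobenius norm, $\|X\|_{op}$ is the largest singular value of $X$, $I$ is the $2\times 2$ identity, $A^T$ is the transpose and $\otimes$ the Kronecker product. (With the vectorization $|B\rangle\!\rangle=\sum_{i,j}b_{ij}\,e_j\otimes e_i$ of $B=(b_{ij})$, one has $|AB-qBA\rangle\!\rangle=M_A|B\rangle\!\rangle$ and $\|B\|_F=\||B\rangle\!\rangle\|$.) *)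

theory Defs
  imports "HOL-Analysis.Analysis"
begin

text \<open>The index set of the product space is the
  product type of the index sets; the pair (a,b) corresponds to the basis vector e_a (x) e_b,
  i.e. the usual lexicographic (Kronecker) ordering.\<close>
definition kron :: "complex^'n^'n \<Rightarrow> complex^'m^'m \<Rightarrow> complex^('n \<times> 'm)^('n \<times> 'm)" where
  "kron A B = (\<chi> r c. A $ fst r $ fst c * B $ snd r $ snd c)"

definition conj_transpose :: "complex^'n^'m \<Rightarrow> complex^'m^'n" where
  "conj_transpose A = (\<chi> i j. cnj (A $ j $ i))"

definition frob_norm :: "complex^'n^'n \<Rightarrow> real" where
  "frob_norm A = sqrt (Re (trace (A ** conj_transpose A)))"

definition op_norm :: "complex^'n^'m \<Rightarrow> real" where
  "op_norm M = onorm (\<lambda>v. M *v v)"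

definition M_op :: "real \<Rightarrow> complex^2^2 \<Rightarrow> complex^(2 \<times> 2)^(2 \<times> 2)" where
  "M_op q A = kron (mat 1) A - (\<chi> r c. complex_of_real q * kron (transpose A) (mat 1) $ r $ c)"

end

theory Submission
  imports Defs
begin

lemma cnorm_sq: "complex_of_real ((cmod z)^2) = z * cnj z"
  by (rule complex_norm_square)

lemma lagrange3:
  fixes a1 a2 a3 b1 b2 b3 :: complex
  shows "((cmod a1)^2 + (cmod a2)^2 + (cmod a3)^2) * ((cmod b1)^2 + (cmod b2)^2 + (cmod b3)^2)
   = (cmod (a1*cnj b1 + a2*cnj b2 + a3*cnj b3))^2 + (cmod (a2*b3-a3*b2))^2
     + (cmod (a3*b1 - a1*b3))^2 + (cmod (a1*b2 - a2*b1))^2"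
proof -
  have "complex_of_real (((cmod a1)^2 + (cmod a2)^2 + (cmod a3)^2) * ((cmod b1)^2 + (cmod b2)^2 + (cmod b3)^2))
   = complex_of_real ((cmod (a1*cnj b1 + a2*cnj b2 + a3*cnj b3))^2 + (cmod (a2*b3-a3*b2))^2
     + (cmod (a3*b1 - a1*b3))^2 + (cmod (a1*b2 - a2*b1))^2)"
    unfolding of_real_mult of_real_add cnorm_sq
    by (simp add: algebra_simps)
  then show ?thesis using of_real_eq_iff by blast
qed

lemma par: "(cmod (x+y))^2 + (cmod (x-y))^2 = 2*((cmod x)^2 + (cmod y)^2)"
proof -
  have "complex_of_real ((cmod (x+y))^2 + (cmod (x-y))^2) = complex_of_real (2*((cmod x)^2 + (cmod y)^2))"
    unfolding of_real_mult of_real_add cnorm_sq by (simp add: algebra_simps)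
  then show ?thesis using of_real_eq_iff by blast
qed

lemma sqexp: "(cmod (x+y))^2 = (cmod x)^2 + (cmod y)^2 + 2 * Re (x * cnj y)"
proof -
  have "complex_of_real ((cmod (x+y))^2) = complex_of_real ((cmod x)^2 + (cmod y)^2) + (x*cnj y + cnj (x * cnj y))"
    unfolding of_real_mult of_real_add cnorm_sq by (simp add: algebra_simps)
  also have "x*cnj y + cnj (x * cnj y) = complex_of_real (2 * Re (x * cnj y))"
    by (rule complex_add_cnj)
  finally show ?thesis by (metis of_real_add of_real_eq_iff)
qed

lemma pauli:
  fixes a1 a2 a3 t c1 c2 c3 :: complex and u w :: real
  shows "u^2 * (cmod (a1*c1+a2*c2+a3*c3))^2
     + (cmod (u*t*a1 + \<i>*w*(a2*c3 - a3*c2)))^2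
     + (cmod (u*t*a2 + \<i>*w*(a3*c1 - a1*c3)))^2
     + (cmod (u*t*a3 + \<i>*w*(a1*c2 - a2*c1)))^2
     \<le> (u^2+w^2) * ((cmod a1)^2 + (cmod a2)^2 + (cmod a3)^2) * ((cmod t)^2 + (cmod c1)^2 + (cmod c2)^2 + (cmod c3)^2)"
proof -
  define na where "na = (cmod a1)^2 + (cmod a2)^2 + (cmod a3)^2"
  define nc where "nc = (cmod c1)^2 + (cmod c2)^2 + (cmod c3)^2"
  define T where "T = (cmod t)^2"
  define X1 where "X1 = a2*c3 - a3*c2"
  define X2 where "X2 = a3*c1 - a1*c3"
  define X3 where "X3 = a1*c2 - a2*c1"
  define P where "P = a1*c1+a2*c2+a3*c3"
  define SX where "SX = (cmod X1)^2 + (cmod X2)^2 + (cmod X3)^2"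
  define E where "E = a1 * cnj X1 + a2 * cnj X2 + a3 * cnj X3"
  define Y1 where "Y1 = a2*cnj c3 - a3*cnj c2"
  define Y2 where "Y2 = a3*cnj c1 - a1*cnj c3"
  define Y3 where "Y3 = a1*cnj c2 - a2*cnj c1"
  define SY where "SY = (cmod Y1)^2 + (cmod Y2)^2 + (cmod Y3)^2"
  have na0: "na \<ge> 0" "nc \<ge> 0" "T \<ge> 0" "SX \<ge> 0" "SY \<ge> 0"
    by (simp_all add: na_def nc_def T_def SX_def SY_def)
  have F1: "SX \<le> na * nc"
    using lagrange3[of a1 a2 a3 c1 c2 c3] unfolding SX_def na_def nc_def X1_def X2_def X3_def
    by simp
  have L2: "na * nc = (cmod P)^2 + SY"
    using lagrange3[of a1 a2 a3 "cnj c1" "cnj c2" "cnj c3"] unfolding SY_def na_def nc_def Y1_def Y2_def Y3_def P_def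
    by simp
  have EY: "E = - (Y1 * cnj a1 + Y2 * cnj a2 + Y3 * cnj a3)"
    unfolding E_def Y1_def Y2_def Y3_def X1_def X2_def X3_def by (simp add: algebra_simps)
  have L3: "(cmod E)^2 \<le> SY * na"
  proof -
    have "(cmod E)^2 = (cmod (Y1 * cnj a1 + Y2 * cnj a2 + Y3 * cnj a3))^2"
      unfolding EY by (simp only: norm_minus_cancel)
    also have "\<dots> \<le> SY * na"
      using lagrange3[of Y1 Y2 Y3 a1 a2 a3] unfolding SY_def na_def by simp
    finally show ?thesis .
  qed
  have F2: "na * (cmod P)^2 + (cmod E)^2 \<le> na * na * nc"
    using L2 L3 by (simp add: algebra_simps)
  have G: "(cmod (u*t*a1 + \<i>*w*X1))^2 + (cmod (u*t*a2 + \<i>*w*X2))^2 + (cmod (u*t*a3 + \<i>*w*X3))^2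
      = u^2 * T * na + w^2 * SX + 2 * (u * w * Re (- \<i> * t * E))"
  proof -
    have e: "\<And>a X. (cmod (u*t*a + \<i>*w*X))^2 = u^2 * T * (cmod a)^2 + w^2 * (cmod X)^2 + 2 * (u*w* Re (- \<i> * t * (a * cnj X)))"
      unfolding sqexp T_def by (simp add: norm_mult power_mult_distrib algebra_simps)
    show ?thesis unfolding e E_def na_def SX_def by (simp add: algebra_simps)
  qed
  have AM: "2 * (u * w * Re (- \<i> * t * E)) * na \<le> w^2 * na^2 * T + u^2 * (cmod E)^2"
  proof -
    have "2 * (u * w * Re (- \<i> * t * E)) * na \<le> 2 * (\<bar>w\<bar> * na * cmod t) * (\<bar>u\<bar> * cmod E)"
    proof -
      have "u * w * Re (- \<i> * t * E) \<le> \<bar>u\<bar> * \<bar>w\<bar> * cmod t * cmod E"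
      proof -
        have "u * w * Re (- \<i> * t * E) \<le> \<bar>u * w * Re (- \<i> * t * E)\<bar>" by simp
        also have "\<dots> = \<bar>u\<bar> * \<bar>w\<bar> * \<bar>Re (- \<i> * t * E)\<bar>" by (simp add: abs_mult)
        also have "\<dots> \<le> \<bar>u\<bar> * \<bar>w\<bar> * cmod (- \<i> * t * E)"
          by (intro mult_left_mono abs_Re_le_cmod) auto
        also have "cmod (- \<i> * t * E) = cmod t * cmod E" by (simp add: norm_mult)
        finally show ?thesis by (simp add: mult.assoc)
      qed
      then have "u * w * Re (- \<i> * t * E) * na \<le> (\<bar>u\<bar> * \<bar>w\<bar> * cmod t * cmod E) * na"
        by (rule mult_right_mono[OF _ na0(1)])
      then show ?thesis by (simp add: algebra_simps)
    qed
    also have "\<dots> \<le> (\<bar>w\<bar> * na * cmod t)^2 + (\<bar>u\<bar> * cmod E)^2"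
      by (rule sum_squares_bound)
    also have "\<dots> = w^2 * na^2 * T + u^2 * (cmod E)^2"
      by (simp add: T_def power_mult_distrib)
    finally show ?thesis .
  qed
  have main: "na * (u^2 * (cmod P)^2 + (u^2 * T * na + w^2 * SX + 2 * (u * w * Re (- \<i> * t * E))))
     \<le> na * ((u^2+w^2) * na * (T + nc))"
  proof -
    have h1: "u^2 * (na * (cmod P)^2) \<le> u^2 * (na * na * nc - (cmod E)^2)"
      using F2 by (intro mult_left_mono) auto
    have h2: "w^2 * (na * SX) \<le> w^2 * (na * (na * nc))"
      using F1 na0 by (intro mult_left_mono) auto
    show ?thesis using h1 h2 AM by (simp add: algebra_simps power2_eq_square)
  qed
  have fin: "u^2 * (cmod P)^2 + (u^2 * T * na + w^2 * SX + 2 * (u * w * Re (- \<i> * t * E)))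
     \<le> (u^2+w^2) * na * (T + nc)"
  proof (cases "na = 0")
    case True
    then have "a1 = 0" "a2 = 0" "a3 = 0" unfolding na_def using na0
      by (auto simp: add_nonneg_eq_0_iff)
    then show ?thesis by (simp add: P_def E_def SX_def X1_def X2_def X3_def na_def)
  next
    case False
    then have "na > 0" using na0 by simp
    then show ?thesis using main by (simp add: mult_le_cancel_left_pos)
  qed
  show ?thesis using fin G unfolding P_def X1_def X2_def X3_def na_def nc_def T_def
    by (simp add: algebra_simps)
qed


lemma cmod_i_mult: "cmod (\<i> * z) = cmod z" by (simp add: norm_mult)

lemma core:
  fixes a b c x11 x12 x21 x22 :: complex and q :: real
  shows "(cmod ((a*x11 + b*x21) - complex_of_real q*(x11*a + x12*c)))^2
       + (cmod ((a*x12 + b*x22) - complex_of_real q*(x11*b - x12*a)))^2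
       + (cmod ((c*x11 - a*x21) - complex_of_real q*(x21*a + x22*c)))^2
       + (cmod ((c*x12 - a*x22) - complex_of_real q*(x21*b - x22*a)))^2
     \<le> (1+q^2) * (2*(cmod a)^2 + (cmod b)^2 + (cmod c)^2)
        * ((cmod x11)^2 + (cmod x12)^2 + (cmod x21)^2 + (cmod x22)^2)"
proof -
  have ii: "\<i> * \<i> = (-1::complex)" by simp
  define a1 where "a1 = (b+c)/2"
  define a2 where "a2 = \<i>*(b-c)/2"
  define a3 where "a3 = a"
  define t where "t = (x11+x22)/2"
  define c3 where "c3 = (x11-x22)/2"
  define c1 where "c1 = (x12+x21)/2"
  define c2 where "c2 = \<i>*(x12-x21)/2"
  define u :: real where "u = 1 - q"
  define w :: real where "w = 1 + q"
  define z0 where "z0 = complex_of_real u * (a1*c1+a2*c2+a3*c3)"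
  define z1 where "z1 = u*t*a1 + \<i>*w*(a2*c3 - a3*c2)"
  define z2 where "z2 = u*t*a2 + \<i>*w*(a3*c1 - a1*c3)"
  define z3 where "z3 = u*t*a3 + \<i>*w*(a1*c2 - a2*c1)"
  have eA: "a = a3" "b = a1 - \<i>*a2" "c = a1 + \<i>*a2"
    unfolding a1_def a2_def a3_def using ii by (simp_all add: field_simps)
  have eB: "x11 = t + c3" "x22 = t - c3" "x12 = c1 - \<i>*c2" "x21 = c1 + \<i>*c2"
    unfolding t_def c1_def c2_def c3_def using ii by (simp_all add: field_simps)
  have Z11: "(a*x11 + b*x21) - complex_of_real q*(x11*a + x12*c) = z0 + z3"
    unfolding eA eB z0_def z3_def u_def w_def using ii by (simp add: field_simps)
  have Z22: "(c*x12 - a*x22) - complex_of_real q*(x21*b - x22*a) = z0 - z3"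
    unfolding eA eB z0_def z3_def u_def w_def using ii by (simp add: field_simps)
  have Z12: "(a*x12 + b*x22) - complex_of_real q*(x11*b - x12*a) = z1 - \<i>*z2"
    unfolding eA eB z1_def z2_def u_def w_def using ii by (simp add: field_simps)
  have Z21: "(c*x11 - a*x21) - complex_of_real q*(x21*a + x22*c) = z1 + \<i>*z2"
    unfolding eA eB z1_def z2_def u_def w_def using ii by (simp add: field_simps)
  have LZ: "(cmod (z0+z3))^2 + (cmod (z1 - \<i>*z2))^2 + (cmod (z1 + \<i>*z2))^2 + (cmod (z0-z3))^2
     = 2 * ((cmod z0)^2 + (cmod z1)^2 + (cmod z2)^2 + (cmod z3)^2)"
    using par[of z0 z3] par[of z1 "\<i>*z2"] by (simp add: cmod_i_mult)
  have nA: "2*(cmod a)^2 + (cmod b)^2 + (cmod c)^2 = 2*((cmod a1)^2 + (cmod a2)^2 + (cmod a3)^2)"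
    using par[of a1 "\<i>*a2"] unfolding eA by (simp add: cmod_i_mult)
  have nB: "(cmod x11)^2 + (cmod x12)^2 + (cmod x21)^2 + (cmod x22)^2 = 2*((cmod t)^2 + (cmod c1)^2 + (cmod c2)^2 + (cmod c3)^2)"
    using par[of t c3] par[of c1 "\<i>*c2"] unfolding eB by (simp add: cmod_i_mult)
  have P: "(cmod z0)^2 + (cmod z1)^2 + (cmod z2)^2 + (cmod z3)^2
     \<le> (u^2+w^2) * ((cmod a1)^2 + (cmod a2)^2 + (cmod a3)^2) * ((cmod t)^2 + (cmod c1)^2 + (cmod c2)^2 + (cmod c3)^2)"
    using pauli[of u a1 c1 a2 c2 a3 c3 t w] unfolding z0_def z1_def z2_def z3_def
    by (simp add: norm_mult power_mult_distrib)
  have uw: "u^2+w^2 = 2*(1+q^2)" unfolding u_def w_def by (simp add: power2_eq_square algebra_simps)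
  show ?thesis unfolding Z11 Z22 Z12 Z21 nA nB
    using LZ P unfolding uw by (simp add: algebra_simps)
qed


lemma sum22: "sum f (UNIV::(2\<times>2) set) = f (1,1) + f (1,2) + f (2,1) + f (2,2)"
proof -
  have "sum f (UNIV::(2\<times>2) set) = sum f (UNIV \<times> UNIV)" by (simp add: UNIV_Times_UNIV)
  also have "\<dots> = (\<Sum>(x,y)\<in>UNIV \<times> UNIV. f (x,y))" by simp
  also have "\<dots> = (\<Sum>x\<in>UNIV. \<Sum>y\<in>UNIV. f (x,y))" by (rule sum.cartesian_product[symmetric])
  finally show ?thesis by (simp add: sum_2 add.assoc)
qed

lemma norm_sq22: "(norm (v::complex^(2\<times>2)))^2 = (cmod (v$(1,1)))^2 + (cmod (v$(1,2)))^2 + (cmod (v$(2,1)))^2 + (cmod (v$(2,2)))^2"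
  unfolding norm_vec_def L2_set_def by (simp add: sum22 sum_nonneg)

theorem mainTheorem6:
  fixes A :: "complex^2^2" and q :: real
  assumes "trace A = 0"
  shows "(op_norm (M_op q A))\<^sup>2 \<le> (1 + q\<^sup>2) * (frob_norm A)\<^sup>2"
proof -
  have a22: "A$2$2 = - A$1$1" using assms unfolding trace_def by (simp add: sum_2 eq_neg_iff_add_eq_0 add.commute)
  have ReF: "Re (trace (A ** conj_transpose A)) = 2*(cmod (A$1$1))^2 + (cmod (A$1$2))^2 + (cmod (A$2$1))^2"
  proof -
    have "\<And>z. Re (z * cnj z) = (cmod z)^2" by (metis Re_complex_of_real complex_norm_square)
    then show ?thesis unfolding trace_def matrix_matrix_mult_def conj_transpose_def
      by (simp add: sum_2 a22)
  qed
  have F2: "(frob_norm A)^2 = 2*(cmod (A$1$1))^2 + (cmod (A$1$2))^2 + (cmod (A$2$1))^2"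
    unfolding frob_norm_def ReF by simp
  define K where "K = sqrt (1+q^2) * frob_norm A"
  have K0: "K \<ge> 0" unfolding K_def frob_norm_def ReF by simp
  have bound: "norm (M_op q A *v v) \<le> K * norm v" for v :: "complex^(2\<times>2)"
  proof -
    have ent: "(M_op q A *v v)$(i,j) = (\<Sum>l\<in>UNIV. A$j$l * v$(i,l)) - complex_of_real q * (\<Sum>k\<in>UNIV. A$k$i * v$(k,j))" for i j
      unfolding M_op_def kron_def matrix_vector_mult_def
      using exhaust_2[of i] exhaust_2[of j]
      by (elim disjE) (simp_all add: sum22 sum_2 mat_def transpose_def algebra_simps)
    have "(norm (M_op q A *v v))^2 \<le> (1+q^2) * (2*(cmod (A$1$1))^2 + (cmod (A$1$2))^2 + (cmod (A$2$1))^2)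
        * ((cmod (v$(1,1)))^2 + (cmod (v$(2,1)))^2 + (cmod (v$(1,2)))^2 + (cmod (v$(2,2)))^2)"
      using core[of "A$1$1" "v$(1,1)" "A$1$2" "v$(1,2)" q "v$(2,1)" "A$2$1" "v$(2,2)"]
      unfolding norm_sq22 ent by (simp add: sum_2 a22 algebra_simps)
    also have "\<dots> = (K * norm v)^2"
      unfolding K_def power_mult_distrib norm_sq22 F2 by (simp add: algebra_simps)
    finally show ?thesis using K0 by (simp add: power2_le_iff_abs_le)
  qed
  have "op_norm (M_op q A) \<le> K" unfolding op_norm_def by (rule onorm_le) (rule bound)
  moreover have "op_norm (M_op q A) \<ge> 0" unfolding op_norm_def
    by (rule onorm_pos_le) (rule matrix_vector_mul_bounded_linear)
  ultimately have "(op_norm (M_op q A))^2 \<le> K^2" by (simp add: power_mono)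
  also have "K^2 = (1 + q\<^sup>2) * (frob_norm A)\<^sup>2" unfolding K_def power_mult_distrib by simp
  finally show ?thesis .
qed

end
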